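(* In $\mathrm{HMF}(\mathbb{C}^2,\Gamma_W,W)$, each $K_{x,i}$ ($1\le i\le p-1$) is orthogonal to each $K_{y,j}$ ($1\le j\le q-1$): $\mathrm{Hom}^\bullet(K_{x,i},K_{y,j})=\mathrm{Hom}^\bullet(K_{y,j},K_{x,i})=0$.
   Context: Let $p,q\ge2$ be integers and $W=x^py+xy^q$. Let $L$ be the abelian group generated by $\vec x,\vec y,\vec c$ modulo $p\vec x+\vec y=\vec x+q\vec y=\vec c$; $S=\mathbb{C}[x,y]$ is $L$-graded with $\deg x=\vec x$, $\deg y=\vec y$, and $R=S/(W)$; $M(l)_k=M_{k+l}$. $\mathrm{HMF}(\mathbb{C}^2,\Gamma_W,W)$ is the homotopy category of $L$-graded matrix factorisations of $W$, equivalent to $D^b(\mathrm{gr}R)/\mathrm{Perf}(\mathrm{gr}R)$, in which a finitely generated $L$-graded $R$-module is identified with its stabilisation; $\mathrm{Hom}^n(X,Y)=\mathrm{Hom}(X,Y[n])$. $K_x=R/(x)$, $K_y=R/(y)$, $K_{x,i}=K_x((i+1-p)\vec x)$, $K_{y,j}=K_y((j+1-q)\vec y)$. *)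

theory Defs
  imports Complex_Main "HOL-Library.Poly_Mapping" "HOL-Library.Product_Plus"
begin

text \<open>Polynomials in x,y: finitely supported maps from exponent pairs (a,b)
  (standing for x^a y^b) to complex coefficients; multiplication is convolution.\<close>
type_synonym poly2 = "(nat \<times> nat) \<Rightarrow>\<^sub>0 complex"

definition varX :: poly2 where "varX = Poly_Mapping.single (1,0) 1"
definition varY :: poly2 where "varY = Poly_Mapping.single (0,1) 1"

definition W :: "nat \<Rightarrow> nat \<Rightarrow> poly2" where
  "W p q = varX ^ p * varY + varX * varY ^ q"

text \<open>Elements of the free abelian group on x,y,c: triples of coefficients
  (coefficient of x-vec, of y-vec, of c-vec).  L is this group modulo the
  subgroup generated by p x + y - c and x + q y - c.\<close>
type_synonym Lrep = "int \<times> int \<times> int"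

definition vx :: Lrep where "vx = (1, 0, 0)"
definition vy :: Lrep where "vy = (0, 1, 0)"
definition vc :: Lrep where "vc = (0, 0, 1)"

definition Leq :: "nat \<Rightarrow> nat \<Rightarrow> Lrep \<Rightarrow> Lrep \<Rightarrow> bool" where
  "Leq p q u v \<longleftrightarrow> (\<exists>m n :: int.
      u - v = (m * int p + n, m + n * int q, - m - n))"

definition homog :: "nat \<Rightarrow> nat \<Rightarrow> Lrep \<Rightarrow> poly2 \<Rightarrow> bool" where
  "homog p q d f \<longleftrightarrow> (\<forall>(a,b) \<in> Poly_Mapping.keys f. Leq p q (int a, int b, 0) d)"

text \<open>A rank-one graded matrix factorisation
   X^0 --u0--> X^1 --u1--> X^0(c)
  with X^0 = S(e0), X^1 = S(e1) is recorded as the tuple (e0, e1, u0, u1).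
  A degree-0 map S(a) \<rightarrow> S(b) is multiplication by a homogeneous polynomial
  of degree b - a.\<close>
type_synonym mf1 = "Lrep \<times> Lrep \<times> poly2 \<times> poly2"

definition is_mf1 :: "nat \<Rightarrow> nat \<Rightarrow> mf1 \<Rightarrow> bool" where
  "is_mf1 p q X = (case X of (e0, e1, u0, u1) \<Rightarrow>
     homog p q (e1 - e0) u0 \<and> homog p q (e0 + vc - e1) u1 \<and> u1 * u0 = W p q)"

text \<open>Shift functor: X[1]^0 = X^1, X[1]^1 = X^0(c), differentials -u1, -u0;
  so that [2] = (c).\<close>
definition shift1 :: "mf1 \<Rightarrow> mf1" where
  "shift1 X = (case X of (e0, e1, u0, u1) \<Rightarrow> (e1, e0 + vc, - u1, - u0))"

definition shiftm1 :: "mf1 \<Rightarrow> mf1" where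
  "shiftm1 X = (case X of (e0, e1, u0, u1) \<Rightarrow> (e1 - vc, e0, - u1, - u0))"

definition shift :: "int \<Rightarrow> mf1 \<Rightarrow> mf1" where
  "shift n X = (if 0 \<le> n then (shift1 ^^ nat n) X else (shiftm1 ^^ nat (- n)) X)"

definition mf_morphism :: "nat \<Rightarrow> nat \<Rightarrow> mf1 \<Rightarrow> mf1 \<Rightarrow> poly2 \<times> poly2 \<Rightarrow> bool" where
  "mf_morphism p q X Z \<phi> = (case X of (e0, e1, u0, u1) \<Rightarrow> case Z of (f0, f1, v0, v1) \<Rightarrow>
     case \<phi> of (\<phi>0, \<phi>1) \<Rightarrow>
       homog p q (f0 - e0) \<phi>0 \<and> homog p q (f1 - e1) \<phi>1 \<and>
       v0 * \<phi>0 = \<phi>1 * u0 \<and> v1 * \<phi>1 = \<phi>0 * u1)"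

definition mf_nullhomotopic :: "nat \<Rightarrow> nat \<Rightarrow> mf1 \<Rightarrow> mf1 \<Rightarrow> poly2 \<times> poly2 \<Rightarrow> bool" where
  "mf_nullhomotopic p q X Z \<phi> = (case X of (e0, e1, u0, u1) \<Rightarrow> case Z of (f0, f1, v0, v1) \<Rightarrow>
     case \<phi> of (\<phi>0, \<phi>1) \<Rightarrow>
       (\<exists>h0 h1. homog p q (f1 - vc - e0) h0 \<and> homog p q (f0 - e1) h1 \<and>
          \<phi>0 = h1 * u0 + v1 * h0 \<and> \<phi>1 = v0 * h1 + h0 * u1))"

definition hmf_hom_zero :: "nat \<Rightarrow> nat \<Rightarrow> mf1 \<Rightarrow> mf1 \<Rightarrow> bool" where
  "hmf_hom_zero p q X Z \<longleftrightarrow>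
     (\<forall>\<phi>. mf_morphism p q X Z \<phi> \<longrightarrow> mf_nullhomotopic p q X Z \<phi>)"

definition hmf_homall_zero :: "nat \<Rightarrow> nat \<Rightarrow> mf1 \<Rightarrow> mf1 \<Rightarrow> bool" where
  "hmf_homall_zero p q X Z \<longleftrightarrow> (\<forall>n::int. hmf_hom_zero p q X (shift n Z))"

text \<open>For f homogeneous of degree df with f * g = W, the stabilisation of the
  graded R-module (R/(f))(l) is the matrix factorisation with
  X^0 = S(l - c), X^1 = S(l - df), u0 = g, u1 = f, so that
  coker(u1 : X^1 \<rightarrow> X^0(c)) = S(l)/f S(l - df) = (S/(f))(l) = (R/(f))(l).\<close>
definition stab_cyclic :: "Lrep \<Rightarrow> poly2 \<Rightarrow> poly2 \<Rightarrow> Lrep \<Rightarrow> mf1" where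
  "stab_cyclic df f g l = (l - vc, l - df, g, f)"

definition Kx :: "nat \<Rightarrow> nat \<Rightarrow> Lrep \<Rightarrow> mf1" where
  "Kx p q l = stab_cyclic vx varX (varX ^ (p - 1) * varY + varY ^ q) l"

definition Ky :: "nat \<Rightarrow> nat \<Rightarrow> Lrep \<Rightarrow> mf1" where
  "Ky p q l = stab_cyclic vy varY (varX ^ p + varX * varY ^ (q - 1)) l"

definition Kxi :: "nat \<Rightarrow> nat \<Rightarrow> nat \<Rightarrow> mf1" where
  "Kxi p q i = Kx p q ((int i + 1 - int p) * 1, 0, 0)"

definition Kyj :: "nat \<Rightarrow> nat \<Rightarrow> nat \<Rightarrow> mf1" where
  "Kyj p q j = Ky p q (0, int j + 1 - int q, 0)"

end

theory Submission
  imports Defs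
begin

lemma lookup_map_key:
  assumes "inj f" shows "Poly_Mapping.lookup (Poly_Mapping.map_key f p) k = Poly_Mapping.lookup p (f k)"
proof -
  note [transfer_rule] = assms
  show ?thesis by transfer simp
qed

lemma lookup_varX_mult:
  fixes f :: poly2 and a b :: nat
  shows "Poly_Mapping.lookup (varX * f) (a, b) = (if a \<ge> 1 then Poly_Mapping.lookup f (a - 1, b) else 0)"
proof -
  have "Poly_Mapping.lookup (varX * f) (a, b) = Sum_any (\<lambda>q::nat\<times>nat. Poly_Mapping.lookup f q when (a, b) = (1,0) + q)"
  proof -
    have e: "\<And>P x. (if P then (1::complex) else 0) * x = (if P then x else 0)" by simp
    show ?thesis unfolding varX_def lookup_mult lookup_single
      by (simp only: when_def e Sum_any.delta')
  qed
  also have "\<dots> = (if a \<ge> 1 then Poly_Mapping.lookup f (a - 1, b) else 0)"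
  proof (cases "a \<ge> 1")
    case True
    have "(\<lambda>q. Poly_Mapping.lookup f q when (a, b) = (1,0) + q) = (\<lambda>q. if q = (a-1,b) then Poly_Mapping.lookup f q else 0)"
      using True by (auto simp: fun_eq_iff when_def)
    note eq = this
    show ?thesis unfolding eq using True by simp
  next
    case False
    have "(\<lambda>q. Poly_Mapping.lookup f q when (a, b) = (1,0) + q) = (\<lambda>q. 0)"
      using False by (auto simp: fun_eq_iff when_def)
    note eq = this
    show ?thesis unfolding eq using False by simp
  qed
  finally show ?thesis .
qed

lemma lookup_varY_mult:
  fixes f :: poly2 and a b :: nat
  shows "Poly_Mapping.lookup (varY * f) (a, b) = (if b \<ge> 1 then Poly_Mapping.lookup f (a, b - 1) else 0)"
proof -
  have "Poly_Mapping.lookup (varY * f) (a, b) = Sum_any (\<lambda>q::nat\<times>nat. Poly_Mapping.lookup f q when (a, b) = (0,1) + q)"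
  proof -
    have e: "\<And>P x. (if P then (1::complex) else 0) * x = (if P then x else 0)" by simp
    show ?thesis unfolding varY_def lookup_mult lookup_single
      by (simp only: when_def e Sum_any.delta')
  qed
  also have "\<dots> = (if b \<ge> 1 then Poly_Mapping.lookup f (a, b - 1) else 0)"
  proof (cases "b \<ge> 1")
    case True
    have "(\<lambda>q. Poly_Mapping.lookup f q when (a, b) = (0,1) + q) = (\<lambda>q. if q = (a,b-1) then Poly_Mapping.lookup f q else 0)"
      using True by (auto simp: fun_eq_iff when_def)
    note eq = this
    show ?thesis unfolding eq using True by simp
  next
    case False
    have "(\<lambda>q. Poly_Mapping.lookup f q when (a, b) = (0,1) + q) = (\<lambda>q. 0)"
      using False by (auto simp: fun_eq_iff when_def)
    note eq = this
    show ?thesis unfolding eq using False by simp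
  qed
  finally show ?thesis .
qed

lemma cancelX: fixes f :: poly2 assumes "varX * f = 0" shows "f = 0"
proof (rule poly_mapping_eqI)
  fix k :: "nat \<times> nat" obtain a b where k: "k = (a, b)" by (cases k)
  have "Poly_Mapping.lookup (varX * f) (Suc a, b) = 0" using assms by simp
  then show "Poly_Mapping.lookup f k = Poly_Mapping.lookup 0 k" unfolding k lookup_varX_mult by simp
qed

lemma cancelY: fixes f :: poly2 assumes "varY * f = 0" shows "f = 0"
proof (rule poly_mapping_eqI)
  fix k :: "nat \<times> nat" obtain a b where k: "k = (a, b)" by (cases k)
  have "Poly_Mapping.lookup (varY * f) (a, Suc b) = 0" using assms by simp
  then show "Poly_Mapping.lookup f k = Poly_Mapping.lookup 0 k" unfolding k lookup_varY_mult by simp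
qed

definition sx :: "nat \<times> nat \<Rightarrow> nat \<times> nat" where "sx = (\<lambda>(a,b). (Suc a, b))"
definition sy :: "nat \<times> nat \<Rightarrow> nat \<times> nat" where "sy = (\<lambda>(a,b). (a, Suc b))"

lemma inj_sx: "inj sx" by (auto simp: inj_def sx_def)
lemma inj_sy: "inj sy" by (auto simp: inj_def sy_def)

lemma divX: fixes f :: poly2 assumes "\<And>b. Poly_Mapping.lookup f (0, b) = 0"
  shows "f = varX * Poly_Mapping.map_key sx f"
proof (rule poly_mapping_eqI)
  fix k :: "nat \<times> nat" obtain a b where k: "k = (a, b)" by (cases k)
  show "Poly_Mapping.lookup f k = Poly_Mapping.lookup (varX * Poly_Mapping.map_key sx f) k"
    unfolding k lookup_varX_mult lookup_map_key[OF inj_sx] using assms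
    by (cases a) (auto simp: sx_def)
qed

lemma divY: fixes f :: poly2 assumes "\<And>a. Poly_Mapping.lookup f (a, 0) = 0"
  shows "f = varY * Poly_Mapping.map_key sy f"
proof (rule poly_mapping_eqI)
  fix k :: "nat \<times> nat" obtain a b where k: "k = (a, b)" by (cases k)
  show "Poly_Mapping.lookup f k = Poly_Mapping.lookup (varY * Poly_Mapping.map_key sy f) k"
    unfolding k lookup_varY_mult lookup_map_key[OF inj_sy] using assms
    by (cases b) (auto simp: sy_def)
qed

lemma Leq_move: "Leq p q u d \<Longrightarrow> u - d = u' - d' \<Longrightarrow> Leq p q u' d'"
  unfolding Leq_def by simp

lemma homog_sx: assumes "homog p q d f" shows "homog p q (d - vx) (Poly_Mapping.map_key sx f)"
  unfolding homog_def
proof (intro ballI, clarify)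
  fix a b assume "(a, b) \<in> Poly_Mapping.keys (Poly_Mapping.map_key sx f)"
  then have "(Suc a, b) \<in> Poly_Mapping.keys f" by (simp add: in_keys_iff lookup_map_key[OF inj_sx], simp add: sx_def)
  then have "Leq p q (int (Suc a), int b, 0) d" using assms unfolding homog_def by blast
  then show "Leq p q (int a, int b, 0) (d - vx)"
    by (rule Leq_move) (cases d, simp add: vx_def)
qed

lemma homog_sy: assumes "homog p q d f" shows "homog p q (d - vy) (Poly_Mapping.map_key sy f)"
  unfolding homog_def
proof (intro ballI, clarify)
  fix a b assume "(a, b) \<in> Poly_Mapping.keys (Poly_Mapping.map_key sy f)"
  then have "(a, Suc b) \<in> Poly_Mapping.keys f" by (simp add: in_keys_iff lookup_map_key[OF inj_sy], simp add: sy_def)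
  then have "Leq p q (int a, int (Suc b), 0) d" using assms unfolding homog_def by blast
  then show "Leq p q (int a, int b, 0) (d - vy)"
    by (rule Leq_move) (cases d, simp add: vy_def)
qed

lemma homog_subset: assumes "homog p q d f" "Poly_Mapping.keys g \<subseteq> Poly_Mapping.keys f"
  shows "homog p q d g" using assms unfolding homog_def by blast

lemma homog_zero: "homog p q d 0" unfolding homog_def by simp

lemma const_zero: assumes "homog p q d f" "\<not> Leq p q (0,0,0) d"
  shows "Poly_Mapping.lookup f (0,0) = 0"
proof (rule ccontr)
  assume "Poly_Mapping.lookup f (0,0) \<noteq> 0"
  then have "(0,0) \<in> Poly_Mapping.keys f" by (simp add: in_keys_iff)
  then have "Leq p q (int 0, int 0, 0) d" using assms(1) unfolding homog_def by blast
  then show False using assms(2) by simp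
qed

lemma divX_h: fixes f :: poly2 assumes "homog p q d f" "\<And>b. Poly_Mapping.lookup f (0, b) = 0"
  shows "\<exists>\<psi>. homog p q (d - vx) \<psi> \<and> f = varX * \<psi>"
  using divX[OF assms(2)] homog_sx[OF assms(1)] by blast

lemma divY_h: fixes f :: poly2 assumes "homog p q d f" "\<And>a. Poly_Mapping.lookup f (a, 0) = 0"
  shows "\<exists>\<psi>. homog p q (d - vy) \<psi> \<and> f = varY * \<psi>"
  using divY[OF assms(2)] homog_sy[OF assms(1)] by blast

lemma split_xy: fixes f :: poly2 assumes "homog p q d f" "Poly_Mapping.lookup f (0,0) = 0"
  shows "\<exists>A B. homog p q (d - vx) A \<and> homog p q (d - vy) B \<and> f = varX * A + varY * B"
proof -
  define A where "A = Poly_Mapping.map_key sx f"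
  define r where "r = f - varX * A"
  have lr: "Poly_Mapping.lookup r (a, b) = (if a = 0 then Poly_Mapping.lookup f (a, b) else 0)" for a b
    unfolding r_def A_def lookup_minus lookup_varX_mult lookup_map_key[OF inj_sx]
    by (cases a) (auto simp: sx_def)
  have "Poly_Mapping.keys r \<subseteq> Poly_Mapping.keys f"
  proof
    fix k assume "k \<in> Poly_Mapping.keys r"
    then show "k \<in> Poly_Mapping.keys f" using lr[of "fst k" "snd k"]
      by (cases k) (simp add: in_keys_iff split: if_splits)
  qed
  then have hr: "homog p q d r" using homog_subset assms(1) by blast
  have "\<And>a. Poly_Mapping.lookup r (a, 0) = 0" using lr assms(2) by simp
  then obtain B where B: "homog p q (d - vy) B" "r = varY * B" using divY_h[OF hr] by blast
  have "f = varX * A + varY * B" using B(2) unfolding r_def by (metis diff_add_cancel add.commute)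
  then show ?thesis using B(1) homog_sx[OF assms(1)] unfolding A_def by blast
qed

lemma gen_even_xy:
  assumes deg: "f1 - vc - e0 = f0 - e0 - vy"
  shows "hmf_hom_zero p q (e0, e1, u0, varX) (f0, f1, v0, varY)"
  unfolding hmf_hom_zero_def
proof (intro allI impI)
  fix \<phi> assume M: "mf_morphism p q (e0, e1, u0, varX) (f0, f1, v0, varY) \<phi>"
  obtain \<phi>0 \<phi>1 where \<phi>: "\<phi> = (\<phi>0, \<phi>1)" by fastforce
  from M have h0: "homog p q (f0 - e0) \<phi>0" and c2: "varY * \<phi>1 = \<phi>0 * varX"
    unfolding \<phi> mf_morphism_def by simp_all
  have "Poly_Mapping.lookup \<phi>0 (a, 0) = 0" for a
  proof -
    have "Poly_Mapping.lookup (varY * \<phi>1) (Suc a, 0) = Poly_Mapping.lookup (varX * \<phi>0) (Suc a, 0)"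
      using c2 by (simp add: mult.commute)
    then show ?thesis unfolding lookup_varX_mult lookup_varY_mult by simp
  qed
  then obtain \<psi> where \<psi>: "homog p q (f0 - e0 - vy) \<psi>" "\<phi>0 = varY * \<psi>" using divY_h[OF h0] by blast
  have "varY * (\<phi>1 - \<psi> * varX) = 0" using c2 \<psi>(2) by (simp add: algebra_simps)
  then have "\<phi>1 = \<psi> * varX" by (drule_tac cancelY) simp
  then show "mf_nullhomotopic p q (e0, e1, u0, varX) (f0, f1, v0, varY) \<phi>"
    unfolding \<phi> mf_nullhomotopic_def using \<psi> deg homog_zero
    by (simp only: prod.case) (rule exI[of _ \<psi>], rule exI[of _ 0], auto)
qed

lemma gen_even_yx:
  assumes deg: "f1 - vc - e0 = f0 - e0 - vx"
  shows "hmf_hom_zero p q (e0, e1, u0, varY) (f0, f1, v0, varX)"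
  unfolding hmf_hom_zero_def
proof (intro allI impI)
  fix \<phi> assume M: "mf_morphism p q (e0, e1, u0, varY) (f0, f1, v0, varX) \<phi>"
  obtain \<phi>0 \<phi>1 where \<phi>: "\<phi> = (\<phi>0, \<phi>1)" by fastforce
  from M have h0: "homog p q (f0 - e0) \<phi>0" and c2: "varX * \<phi>1 = \<phi>0 * varY"
    unfolding \<phi> mf_morphism_def by simp_all
  have "Poly_Mapping.lookup \<phi>0 (0, b) = 0" for b
  proof -
    have "Poly_Mapping.lookup (varX * \<phi>1) (0, Suc b) = Poly_Mapping.lookup (varY * \<phi>0) (0, Suc b)"
      using c2 by (simp add: mult.commute)
    then show ?thesis unfolding lookup_varX_mult lookup_varY_mult by simp
  qed
  then obtain \<psi> where \<psi>: "homog p q (f0 - e0 - vx) \<psi>" "\<phi>0 = varX * \<psi>" using divX_h[OF h0] by blast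
  have "varX * (\<phi>1 - \<psi> * varY) = 0" using c2 \<psi>(2) by (simp add: algebra_simps)
  then have "\<phi>1 = \<psi> * varY" by (drule_tac cancelX) simp
  then show "mf_nullhomotopic p q (e0, e1, u0, varY) (f0, f1, v0, varX) \<phi>"
    unfolding \<phi> mf_nullhomotopic_def using \<psi> deg homog_zero
    by (simp only: prod.case) (rule exI[of _ \<psi>], rule exI[of _ 0], auto)
qed

lemma gen_odd_A:
  assumes gx: "gx = varY * s" and gy: "gy = varX * s"
    and nl: "\<not> Leq p q (0,0,0) (f1 - e1)"
    and deg1: "f1 - vc - e0 = f1 - e1 - vx" and deg2: "f0 - e1 = f1 - e1 - vy"
  shows "hmf_hom_zero p q (e0, e1, gx, varX) (f0, f1, - varY, - gy)"
  unfolding hmf_hom_zero_def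
proof (intro allI impI)
  fix \<phi> assume M: "mf_morphism p q (e0, e1, gx, varX) (f0, f1, - varY, - gy) \<phi>"
  obtain \<phi>0 \<phi>1 where \<phi>: "\<phi> = (\<phi>0, \<phi>1)" by fastforce
  from M have h1: "homog p q (f1 - e1) \<phi>1" and c2: "(- gy) * \<phi>1 = \<phi>0 * varX"
    unfolding \<phi> mf_morphism_def by simp_all
  obtain A B where AB: "homog p q (f1 - e1 - vx) A" "homog p q (f1 - e1 - vy) B"
    "\<phi>1 = varX * A + varY * B"
    using split_xy[OF h1 const_zero[OF h1 nl]] by blast
  have "varX * (\<phi>0 + s * \<phi>1) = \<phi>0 * varX + gy * \<phi>1" unfolding gy by (simp add: algebra_simps)
  also have "\<dots> = 0" by (subst c2[symmetric]) simp
  finally have "varX * (\<phi>0 + s * \<phi>1) = 0" .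
  then have "\<phi>0 + s * \<phi>1 = 0" by (rule cancelX)
  then have e0: "\<phi>0 = - (s * \<phi>1)" by (simp add: eq_neg_iff_add_eq_0)
  have "\<phi>0 = (- B) * gx + (- gy) * A" "\<phi>1 = (- varY) * (- B) + A * varX"
    unfolding e0 AB(3) gx gy by (simp_all add: algebra_simps)
  then show "mf_nullhomotopic p q (e0, e1, gx, varX) (f0, f1, - varY, - gy) \<phi>"
    unfolding \<phi> mf_nullhomotopic_def using AB deg1 deg2 homog_subset[of p q _ B "- B"]
    by (simp only: prod.case) (rule exI[of _ A], rule exI[of _ "- B"], auto)
qed

lemma gen_odd_B:
  assumes gx: "gx = varY * s" and gy: "gy = varX * s"
    and nl: "\<not> Leq p q (0,0,0) (f1 - e1)"
    and deg1: "f1 - vc - e0 = f1 - e1 - vy" and deg2: "f0 - e1 = f1 - e1 - vx"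
  shows "hmf_hom_zero p q (e0, e1, gy, varY) (f0, f1, - varX, - gx)"
  unfolding hmf_hom_zero_def
proof (intro allI impI)
  fix \<phi> assume M: "mf_morphism p q (e0, e1, gy, varY) (f0, f1, - varX, - gx) \<phi>"
  obtain \<phi>0 \<phi>1 where \<phi>: "\<phi> = (\<phi>0, \<phi>1)" by fastforce
  from M have h1: "homog p q (f1 - e1) \<phi>1" and c2: "(- gx) * \<phi>1 = \<phi>0 * varY"
    unfolding \<phi> mf_morphism_def by simp_all
  obtain A B where AB: "homog p q (f1 - e1 - vx) A" "homog p q (f1 - e1 - vy) B"
    "\<phi>1 = varX * A + varY * B"
    using split_xy[OF h1 const_zero[OF h1 nl]] by blast
  have "varY * (\<phi>0 + s * \<phi>1) = \<phi>0 * varY + gx * \<phi>1" unfolding gx by (simp add: algebra_simps)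
  also have "\<dots> = 0" by (subst c2[symmetric]) simp
  finally have "varY * (\<phi>0 + s * \<phi>1) = 0" .
  then have "\<phi>0 + s * \<phi>1 = 0" by (rule cancelY)
  then have e0: "\<phi>0 = - (s * \<phi>1)" by (simp add: eq_neg_iff_add_eq_0)
  have "\<phi>0 = (- A) * gy + (- gx) * B" "\<phi>1 = (- varX) * (- A) + B * varY"
    unfolding e0 AB(3) gx gy by (simp_all add: algebra_simps)
  then show "mf_nullhomotopic p q (e0, e1, gy, varY) (f0, f1, - varX, - gx) \<phi>"
    unfolding \<phi> mf_nullhomotopic_def using AB deg1 deg2 homog_subset[of p q _ A "- A"]
    by (simp only: prod.case) (rule exI[of _ B], rule exI[of _ "- A"], auto)
qed

definition tw :: "int \<Rightarrow> mf1 \<Rightarrow> mf1" where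
  "tw k X = (case X of (e0, e1, u0, u1) \<Rightarrow> (e0 + (0,0,k), e1 + (0,0,k), u0, u1))"

definition inS :: "mf1 \<Rightarrow> mf1 \<Rightarrow> bool" where
  "inS X Z \<longleftrightarrow> (\<exists>k. Z = tw k X \<or> Z = shift1 (tw k X))"

lemma inS_shift1: "inS X Z \<Longrightarrow> inS X (shift1 Z)"
proof -
  assume "inS X Z"
  then obtain k where "Z = tw k X \<or> Z = shift1 (tw k X)" unfolding inS_def by blast
  then show ?thesis
  proof
    assume "Z = tw k X" then show ?thesis unfolding inS_def by blast
  next
    assume Z: "Z = shift1 (tw k X)"
    have "shift1 Z = tw (k + 1) X" unfolding Z
      by (cases X) (auto simp: shift1_def tw_def vc_def)
    then show ?thesis unfolding inS_def by blast
  qed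
qed

lemma inS_shiftm1: "inS X Z \<Longrightarrow> inS X (shiftm1 Z)"
proof -
  assume "inS X Z"
  then obtain k where "Z = tw k X \<or> Z = shift1 (tw k X)" unfolding inS_def by blast
  then show ?thesis
  proof
    assume Z: "Z = tw k X"
    have "shiftm1 Z = shift1 (tw (k - 1) X)" unfolding Z
      by (cases X) (auto simp: shift1_def shiftm1_def tw_def vc_def)
    then show ?thesis unfolding inS_def by blast
  next
    assume Z: "Z = shift1 (tw k X)"
    have "shiftm1 Z = tw k X" unfolding Z
      by (cases X) (auto simp: shift1_def shiftm1_def tw_def vc_def)
    then show ?thesis unfolding inS_def by blast
  qed
qed

lemma inS_shift: "inS X (shift n X)"
proof -
  have "tw 0 X = X" by (cases X) (simp add: tw_def zero_prod_def[symmetric])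
  then have base: "inS X X" unfolding inS_def by metis
  have a: "inS X ((shift1 ^^ m) X)" for m
    by (induction m) (simp_all add: base inS_shift1)
  have b: "inS X ((shiftm1 ^^ m) X)" for m
    by (induction m) (simp_all add: base inS_shiftm1)
  show ?thesis unfolding shift_def using a b by simp
qed

lemma NT:
  fixes p q i j :: nat and m n :: int
  assumes "2 \<le> p" "2 \<le> q" "1 \<le> i" "i \<le> p - 1" "1 \<le> j" "j \<le> q - 1"
    and e1: "int i - int p = m * int p + n" and e2: "int q - 1 - int j = m + n * int q"
  shows False
proof -
  have "m * (int p * int q - 1) = int i * int q - int p * int q - int q + 1 + int j"
    (is "_ = ?N")
    using e1 e2 by (simp add: algebra_simps)
  moreover have "int i * int q \<le> (int p - 1) * int q" using assms(4) assms(1)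
    by (intro mult_right_mono) auto
  moreover have "int i * int q \<ge> 1 * int q" using assms(3)
    by (intro mult_right_mono) auto
  moreover have "int p * int q \<ge> 4" using mult_le_mono[OF assms(1) assms(2)] by (metis of_nat_mult of_nat_le_iff of_nat_numeral numeral_times_numeral semiring_norm(12) semiring_norm(13))
  ultimately have N1: "?N < 0" and N2: "?N > - (int p * int q - 1)" and P: "int p * int q - 1 > 0"
    using assms(5,6) by (simp_all add: algebra_simps)
  show False
  proof (cases "m \<ge> 0")
    case True
    then have "m * (int p * int q - 1) \<ge> 0" using P by simp
    then show False using N1 \<open>m * _ = ?N\<close> by linarith
  next
    case False
    then have "m * (int p * int q - 1) \<le> -1 * (int p * int q - 1)" using P
      by (intro mult_right_mono) auto
    then have "m * (int p * int q - 1) \<le> - (int p * int q - 1)" by simp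
    then show False using N2 \<open>m * _ = ?N\<close> by linarith
  qed
qed

lemma gx_eq: assumes "1 \<le> q"
  shows "varX ^ (p - 1) * varY + varY ^ q = varY * (varX ^ (p - 1) + varY ^ (q - 1))"
proof -
  obtain q' where "q = Suc q'" using assms by (cases q) auto
  then show ?thesis by (simp add: algebra_simps)
qed

lemma gy_eq: assumes "1 \<le> p"
  shows "varX ^ p + varX * varY ^ (q - 1) = varX * (varX ^ (p - 1) + varY ^ (q - 1))"
proof -
  obtain p' where "p = Suc p'" using assms by (cases p) auto
  then show ?thesis by (simp add: algebra_simps)
qed

lemma A_even: "hmf_hom_zero p q (Kxi p q i) (tw k (Kyj p q j))"
  unfolding Kxi_def Kx_def Kyj_def Ky_def stab_cyclic_def tw_def prod.case
  by (rule gen_even_xy) (simp add: vc_def vy_def vx_def)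

lemma B_even: "hmf_hom_zero p q (Kyj p q j) (tw k (Kxi p q i))"
  unfolding Kxi_def Kx_def Kyj_def Ky_def stab_cyclic_def tw_def prod.case
  by (rule gen_even_yx) (simp add: vc_def vy_def vx_def)

lemma NTA:
  fixes p q i j :: nat
  assumes "2 \<le> p" "2 \<le> q" "1 \<le> i" "i \<le> p - 1" "1 \<le> j" "j \<le> q - 1"
  shows "Leq p q (0,0,0) (a, b, k) \<Longrightarrow> a = int p - int i \<Longrightarrow> b = int j + 1 - int q \<Longrightarrow> False"
proof -
  assume "Leq p q (0,0,0) (a, b, k)" "a = int p - int i" "b = int j + 1 - int q"
  then obtain m n where "int i - int p = m * int p + n" "int q - 1 - int j = m + n * int q"
    unfolding Leq_def by (auto simp: algebra_simps)
  then show False by (rule NT[OF assms])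
qed

lemma NTB:
  fixes p q i j :: nat
  assumes "2 \<le> p" "2 \<le> q" "1 \<le> i" "i \<le> p - 1" "1 \<le> j" "j \<le> q - 1"
  shows "Leq p q (0,0,0) (a, b, k) \<Longrightarrow> a = int i + 1 - int p \<Longrightarrow> b = int q - int j \<Longrightarrow> False"
proof -
  assume "Leq p q (0,0,0) (a, b, k)" "a = int i + 1 - int p" "b = int q - int j"
  then obtain m n where "int j - int q = n * int q + m" "int p - 1 - int i = n + m * int p"
    unfolding Leq_def by (auto simp: algebra_simps)
  then show False using NT[of q p j i n m] assms by auto
qed

lemma A_odd:
  fixes p q i j :: nat
  assumes "2 \<le> p" "2 \<le> q" "1 \<le> i" "i \<le> p - 1" "1 \<le> j" "j \<le> q - 1"
  shows "hmf_hom_zero p q (Kxi p q i) (shift1 (tw k (Kyj p q j)))"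
  unfolding Kxi_def Kx_def Kyj_def Ky_def stab_cyclic_def tw_def prod.case shift1_def
  apply (rule gen_odd_A[where s = "varX ^ (p - 1) + varY ^ (q - 1)"])
  subgoal using assms by (intro gx_eq) auto
  subgoal using assms by (intro gy_eq) auto
  subgoal
    apply (simp add: vc_def vx_def)
    apply (rule notI, erule NTA[OF assms])
    by simp_all
  by (simp_all add: vc_def vy_def vx_def)

lemma B_odd:
  fixes p q i j :: nat
  assumes "2 \<le> p" "2 \<le> q" "1 \<le> i" "i \<le> p - 1" "1 \<le> j" "j \<le> q - 1"
  shows "hmf_hom_zero p q (Kyj p q j) (shift1 (tw k (Kxi p q i)))"
  unfolding Kxi_def Kx_def Kyj_def Ky_def stab_cyclic_def tw_def prod.case shift1_def
  apply (rule gen_odd_B[where s = "varX ^ (p - 1) + varY ^ (q - 1)"])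
  subgoal using assms by (intro gx_eq) auto
  subgoal using assms by (intro gy_eq) auto
  subgoal
    apply (simp add: vc_def vy_def)
    apply (rule notI, erule NTB[OF assms])
    by simp_all
  by (simp_all add: vc_def vy_def vx_def)

theorem lemma2p7:
  fixes p q i j :: nat
  assumes "2 \<le> p" and "2 \<le> q"
    and "1 \<le> i" and "i \<le> p - 1"
    and "1 \<le> j" and "j \<le> q - 1"
  shows "hmf_homall_zero p q (Kxi p q i) (Kyj p q j) \<and>
         hmf_homall_zero p q (Kyj p q j) (Kxi p q i)"
  unfolding hmf_homall_zero_def
proof (intro conjI allI)
  fix n :: int
  obtain k where "shift n (Kyj p q j) = tw k (Kyj p q j) \<or> shift n (Kyj p q j) = shift1 (tw k (Kyj p q j))"
    using inS_shift[of "Kyj p q j" n] unfolding inS_def by blast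
  then show "hmf_hom_zero p q (Kxi p q i) (shift n (Kyj p q j))"
    using A_even A_odd[OF assms] by metis
next
  fix n :: int
  obtain k where "shift n (Kxi p q i) = tw k (Kxi p q i) \<or> shift n (Kxi p q i) = shift1 (tw k (Kxi p q i))"
    using inS_shift[of "Kxi p q i" n] unfolding inS_def by blast
  then show "hmf_hom_zero p q (Kyj p q j) (shift n (Kxi p q i))"
    using B_even B_odd[OF assms] by metis
qed

end
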